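(* Assume $\frac1{\alpha^2}\ge\frac45+\mu$ for a constant $\mu>0$. There is $a_0>0$ depending only on $S$ and $\mu$ such that for all $0<a\le\min(a_0,\lambda/2)$ and every $t\ge0$: if $x^s_{N/4}(t)\ge0$, then $$\mathbb E\left[\Psi(x^s(t+1))\,\middle|\,x^s(t)\right]\le\left(1-\frac{3\mu a}{4N}\right)\Psi(x^s(t))+1.$$
   Context: Weighted balls into weighted bins: $n$ bins with positive integer weights $N_1,\dots,N_n$, $N=\sum_iN_i$; $\mathcal D$ on $[n]$ is $(\alpha,\beta)$-biased, i.e. $\frac{N_i}{\alpha N}\le\Pr_{\mathcal D}[i]\le\frac{\beta N_i}{N}$, $\alpha,\beta\ge1$. Ball weights $w(t)$ are i.i.d. from $\mathcal W$ on $[0,\infty)$ with $\mathbb E[\mathcal W]=1$ and $M(z)=\mathbb E[e^{z\mathcal W}]$ finite at $z=\lambda$ for some $\lambda>0$; $S\ge1$ is a constant with $M''(z)\le2S$ for all $|z|<\lambda/2$. Each round two bins are sampled independently from $\mathcal D$ and the ball goes to the sampled bin with smaller value $v_i(t-1)=w_i(t-1)/N_i$. Slot formulation: bin $i$ consists of $N_i$ unit slots; the normalized slot vector $x^s(t)\in\mathbb R^N$ has, for each slot of bin $i$, the entry $v_i(t)-\frac1N\sum_{t'\le t}w(t')$, indexed so that $x^s_1(t)\ge\dots\ge x^s_N(t)$; fractional indices such as $N/4$ are rounded up. $\Psi(y)=\sum_je^{-ay_j}$. *)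

theory Defs
  imports "HOL-Probability.Probability"
begin

text \<open>Bins are indexed by 0..<n; bin i has positive integer weight Nw i.\<close>

definition Ntot :: "nat \<Rightarrow> (nat \<Rightarrow> nat) \<Rightarrow> nat" where
  "Ntot n Nw = (\<Sum>i<n. Nw i)"

definition bval :: "(nat \<Rightarrow> nat) \<Rightarrow> (nat \<Rightarrow> real) \<Rightarrow> nat \<Rightarrow> real" where
  "bval Nw w i = w i / real (Nw i)"

text \<open>Normalised slot vector, sorted non-increasingly: each bin i contributes Nw i slots
  with entry v_i - (total weight)/N. Total weight allocated so far = sum of loads.\<close>
definition slot_vec :: "nat \<Rightarrow> (nat \<Rightarrow> nat) \<Rightarrow> (nat \<Rightarrow> real) \<Rightarrow> real list" where
  "slot_vec n Nw w =
     rev (sort (concat (map (\<lambda>i. replicate (Nw i)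
        (bval Nw w i - (\<Sum>k<n. w k) / real (Ntot n Nw))) [0..<n])))"

text \<open>1-indexed entry x^s_k.\<close>
definition slot_at :: "real list \<Rightarrow> nat \<Rightarrow> real" where
  "slot_at xs k = xs ! (k - 1)"

definition Psi :: "real \<Rightarrow> real list \<Rightarrow> real" where
  "Psi a ys = sum_list (map (\<lambda>y. exp (- a * y)) ys)"

text \<open>Valid allocation rule: sel i j is the bin among the two sampled bins i, j that
  receives the ball (the one with smaller value; ties broken arbitrarily).\<close>
definition valid_sel :: "nat \<Rightarrow> (nat \<Rightarrow> nat) \<Rightarrow> (nat \<Rightarrow> real) \<Rightarrow> (nat \<Rightarrow> nat \<Rightarrow> nat) \<Rightarrow> bool" where
  "valid_sel n Nw w sel \<longleftrightarrow> (\<forall>i<n. \<forall>j<n. sel i j \<in> {i, j}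
      \<and> (bval Nw w i < bval Nw w j \<longrightarrow> sel i j = i)
      \<and> (bval Nw w j < bval Nw w i \<longrightarrow> sel i j = j))"

text \<open>Expectation of Psi of the slot vector after one round, given the current load vector w:
  two bins i, j drawn independently from p, ball weight x drawn from W.\<close>
definition step_exp :: "nat \<Rightarrow> (nat \<Rightarrow> nat) \<Rightarrow> (nat \<Rightarrow> real) \<Rightarrow> real measure
      \<Rightarrow> (nat \<Rightarrow> nat \<Rightarrow> nat) \<Rightarrow> real \<Rightarrow> (nat \<Rightarrow> real) \<Rightarrow> real" where
  "step_exp n Nw p W sel a w =
     (\<Sum>i<n. \<Sum>j<n. p i * p j *
        integral\<^sup>L W (\<lambda>x. Psi a (slot_vec n Nw (w(sel i j := w (sel i j) + x)))))"

definition mgf :: "real measure \<Rightarrow> real \<Rightarrow> real" where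
  "mgf W z = integral\<^sup>L W (\<lambda>x. exp (z * x))"

end

theory Submission imports Defs begin


lemma pow_le_exp:
  fixes u :: real assumes "u \<ge> 0"
  shows "u^j \<le> real j ^ j * exp u"
proof (cases "j = 0")
  case True then show ?thesis using assms by simp
next
  case False
  have "u / j \<le> exp (u / j)" using exp_ge_add_one_self[of "u/j"] by linarith
  then have "(u/j)^j \<le> exp (u/j) ^ j" using assms by (intro power_mono) auto
  also have "\<dots> = exp u" using False by (simp add: exp_of_nat_mult[symmetric])
  finally have "(u/j)^j \<le> exp u" .
  then have "real j ^ j * (u/j)^j \<le> real j ^ j * exp u" by (intro mult_left_mono) auto
  moreover have "real j ^ j * (u/j)^j = u^j" using False by (simp add: power_divide)
  ultimately show ?thesis by simp
qed

lemma exp_diff_bound: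
  fixes a b :: real
  shows "\<bar>exp b - exp a\<bar> \<le> \<bar>b - a\<bar> * exp (max a b)"
proof -
  have *: "exp d - exp c \<le> (d - c) * exp d" if "c \<le> d" for c d :: real
  proof -
    have "1 - exp (c - d) \<le> d - c" using exp_ge_add_one_self[of "c - d"] by linarith
    then have "exp d * (1 - exp (c - d)) \<le> exp d * (d - c)" by (intro mult_left_mono) auto
    moreover have "exp d * (1 - exp (c - d)) = exp d - exp c" by (simp add: algebra_simps exp_diff)
    ultimately show ?thesis by (simp add: algebra_simps)
  qed
  show ?thesis
  proof (cases "a \<le> b")
    case True then show ?thesis using *[OF True] by (simp add: max_def)
  next
    case False then show ?thesis using *[of b a] by (simp add: max_def abs_if)
  qed
qed

locale mgfW = prob_space W for W :: "real measure" +
  fixes lam :: real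
  assumes sets_W: "sets W = sets borel"
    and nonneg: "AE x in W. x \<ge> 0"
    and lam_pos: "lam > 0"
    and int_lam: "integrable W (\<lambda>x. exp (lam * x))"
begin

lemma meas: "f \<in> borel_measurable borel \<Longrightarrow> f \<in> borel_measurable W"
  using measurable_cong_sets[OF sets_W refl] by auto

lemma int_pow_exp:
  assumes "r < lam"
  shows "integrable W (\<lambda>x. x^j * exp (r*x))"
proof (rule Bochner_Integration.integrable_bound)
  define \<epsilon> where "\<epsilon> = lam - max r 0"
  have ep: "\<epsilon> > 0" "r + \<epsilon> \<le> lam" using assms lam_pos unfolding \<epsilon>_def by auto
  define C where "C = real j ^ j / \<epsilon> ^ j"
  show "integrable W (\<lambda>x. C * exp (lam * x))" using int_lam by simp
  show "(\<lambda>x. x^j * exp (r*x)) \<in> borel_measurable W" by (intro meas) measurable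
  show "AE x in W. norm (x^j * exp (r*x)) \<le> norm (C * exp (lam * x))"
    using nonneg
  proof eventually_elim
    fix x :: real assume x: "0 \<le> x"
    have "(\<epsilon>*x)^j \<le> real j ^ j * exp (\<epsilon>*x)" using pow_le_exp[of "\<epsilon>*x" j] x ep by auto
    then have "x^j \<le> C * exp (\<epsilon>*x)" using ep unfolding C_def
      by (simp add: power_mult_distrib field_simps)
    then have "x^j * exp (r*x) \<le> C * exp (\<epsilon>*x) * exp (r*x)" by (intro mult_right_mono) auto
    also have "\<dots> = C * exp ((r+\<epsilon>)*x)" by (simp add: exp_add[symmetric] algebra_simps)
    also have "\<dots> \<le> C * exp (lam * x)" using ep x unfolding C_def
      by (intro mult_left_mono) (auto intro!: mult_right_mono)
    finally show "norm (x^j * exp (r*x)) \<le> norm (C * exp (lam * x))" using x ep unfolding C_def by simp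
  qed
qed

lemma deriv_F:
  assumes z: "\<bar>z\<bar> < lam"
  shows "((\<lambda>y. \<integral>x. x^k * exp (y*x) \<partial>W) has_real_derivative (\<integral>x. x^Suc k * exp (z*x) \<partial>W)) (at z)"
proof -
  define \<delta> where "\<delta> = (lam - \<bar>z\<bar>)/2"
  define r where "r = \<bar>z\<bar> + \<delta>"
  have dpos: "\<delta> > 0" using z unfolding \<delta>_def by simp
  have rl: "r < lam" using z unfolding \<delta>_def r_def by (simp add: field_simps)
  let ?F = "\<lambda>y. \<integral>x. x^k * exp (y*x) \<partial>W"
  show ?thesis
    unfolding has_field_derivative_iff tendsto_at_iff_sequentially
  proof (intro allI impI)
    fix X :: "nat \<Rightarrow> real" assume Xne: "\<forall>i. X i \<in> UNIV - {z}" and Xl: "X \<longlonglongrightarrow> z"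
    obtain N0 where N0: "\<And>i. i \<ge> N0 \<Longrightarrow> \<bar>X i - z\<bar> < \<delta>"
      using Xl dpos unfolding LIMSEQ_iff by (auto simp: dist_real_def)
    define Y where "Y i = X (i + N0)" for i
    have Yne: "Y i \<noteq> z" for i using Xne unfolding Y_def by auto
    have Yd: "\<bar>Y i - z\<bar> < \<delta>" for i using N0 unfolding Y_def by auto
    have Yl: "Y \<longlonglongrightarrow> z" using Xl unfolding Y_def by (rule LIMSEQ_ignore_initial_segment)
    have Yr: "Y i \<le> r" "Y i < lam" for i using Yd[of i] rl unfolding r_def by auto
    define s where "s i x = (x^k * exp (Y i * x) - x^k * exp (z*x)) / (Y i - z)" for i x
    have lim: "(\<lambda>i. integral\<^sup>L W (s i)) \<longlonglongrightarrow> (\<integral>x. x^Suc k * exp (z*x) \<partial>W)"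
    proof (rule integral_dominated_convergence[where w="\<lambda>x. x^Suc k * exp (r*x)"])
      show "(\<lambda>x. x^Suc k * exp (z*x)) \<in> borel_measurable W" by (intro meas) measurable
      show "s i \<in> borel_measurable W" for i unfolding s_def by (intro meas) measurable
      show "integrable W (\<lambda>x. x^Suc k * exp (r*x))" using rl by (rule int_pow_exp)
      show "AE x in W. (\<lambda>i. s i x) \<longlonglongrightarrow> x^Suc k * exp (z*x)"
      proof (rule AE_I2)
        fix x :: real
        have "((\<lambda>y. x^k * exp (y*x)) has_real_derivative x^k * (exp (z*x) * x)) (at z)"
          by (auto intro!: derivative_eq_intros)
        then have "((\<lambda>y. (x^k * exp (y*x) - x^k * exp (z*x)) / (y - z)) \<longlongrightarrow> x^k * (exp (z*x) * x)) (at z)"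
          unfolding has_field_derivative_iff .
        then have "((\<lambda>y. (x^k * exp (y*x) - x^k * exp (z*x)) / (y - z)) \<circ> Y) \<longlonglongrightarrow> x^k * (exp (z*x) * x)"
          unfolding tendsto_at_iff_sequentially using Yne Yl by auto
        then show "(\<lambda>i. s i x) \<longlonglongrightarrow> x^Suc k * exp (z*x)"
          unfolding s_def comp_def by (simp add: algebra_simps)
      qed
      show "AE x in W. norm (s i x) \<le> x^Suc k * exp (r*x)" for i
        using nonneg
      proof eventually_elim
        fix x :: real assume x: "0 \<le> x"
        have ne: "Y i - z \<noteq> 0" using Yne[of i] by auto
        have "\<bar>exp (Y i * x) - exp (z*x)\<bar> \<le> \<bar>Y i * x - z*x\<bar> * exp (max (z*x) (Y i * x))"
          by (rule exp_diff_bound)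
        also have "\<dots> \<le> \<bar>Y i - z\<bar> * x * exp (r*x)"
        proof -
          have "max (z*x) (Y i * x) \<le> r*x" using x Yr[of i] unfolding r_def
            by (auto intro!: mult_right_mono simp: max_def dpos) (smt (verit) dpos mult_right_mono)
          then show ?thesis using x by (auto simp: abs_mult left_diff_distrib[symmetric] intro!: mult_left_mono)
        qed
        finally have b: "\<bar>exp (Y i * x) - exp (z*x)\<bar> \<le> \<bar>Y i - z\<bar> * x * exp (r*x)" .
        have "norm (s i x) = x^k * \<bar>exp (Y i * x) - exp (z*x)\<bar> / \<bar>Y i - z\<bar>"
          unfolding s_def using x by (simp add: abs_mult right_diff_distrib[symmetric])
        also have "\<dots> \<le> x^k * (\<bar>Y i - z\<bar> * x * exp (r*x)) / \<bar>Y i - z\<bar>"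
          using b x by (intro divide_right_mono mult_left_mono) auto
        also have "\<dots> = x^Suc k * exp (r*x)" using ne by (simp add: field_simps)
        finally show "norm (s i x) \<le> x^Suc k * exp (r*x)" .
      qed
    qed
    have eq: "integral\<^sup>L W (s i) = (?F (Y i) - ?F z) / (Y i - z)" for i
    proof -
      have i1: "integrable W (\<lambda>x. x^k * exp (Y i * x))" using Yr by (intro int_pow_exp) auto
      have i2: "integrable W (\<lambda>x. x^k * exp (z * x))" using z by (intro int_pow_exp) auto
      show ?thesis unfolding s_def using i1 i2 by simp
    qed
    have "(\<lambda>i. ((\<lambda>y. (?F y - ?F z) / (y - z)) \<circ> X) (i + N0)) \<longlonglongrightarrow> (\<integral>x. x^Suc k * exp (z*x) \<partial>W)"
      using lim unfolding eq Y_def comp_def by simp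
    then show "((\<lambda>y. (?F y - ?F z) / (y - z)) \<circ> X) \<longlonglongrightarrow> (\<integral>x. x^Suc k * exp (z*x) \<partial>W)"
      by (rule LIMSEQ_offset)
  qed
qed


lemma mgf_taylor:
  fixes S :: real
  assumes E1: "integral\<^sup>L W (\<lambda>x. x) = 1"
    and D: "\<forall>z. \<bar>z\<bar> < lam / 2 \<longrightarrow> deriv (deriv (\<lambda>z. \<integral>x. exp (z*x) \<partial>W)) z \<le> 2 * S"
    and zb: "\<bar>z\<bar> \<le> lam / 2"
  shows "(\<integral>x. exp (z*x) \<partial>W) \<le> 1 + z + S * z^2"
proof -
  define F where "F k y = (\<integral>x. x^k * exp (y*x) \<partial>W)" for k y
  have M: "(\<lambda>z. \<integral>x. exp (z*x) \<partial>W) = F 0" unfolding F_def by simp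
  have dF: "\<bar>y\<bar> < lam \<Longrightarrow> (F k has_real_derivative F (Suc k) y) (at y)" for k y
    unfolding F_def by (rule deriv_F)
  have d1: "deriv (F 0) y = F 1 y" if "\<bar>y\<bar> < lam" for y
    using dF[OF that, of 0] by (simp add: DERIV_imp_deriv)
  have d2: "deriv (deriv (F 0)) y = F 2 y" if "\<bar>y\<bar> < lam" for y
  proof -
    have "(deriv (F 0) has_real_derivative F 2 y) (at y)"
    proof (rule has_field_derivative_transform_within_open[where S="{-lam<..<lam}"])
      show "(F 1 has_real_derivative F 2 y) (at y)" using dF[OF that, of 1] by (simp add: numeral_2_eq_2)
      show "y \<in> {-lam<..<lam}" using that by auto
      show "F 1 x = deriv (F 0) x" if "x \<in> {-lam<..<lam}" for x using d1[of x] that by auto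
    qed auto
    then show ?thesis by (simp add: DERIV_imp_deriv)
  qed
  have F2: "F 2 y \<le> 2 * S" if "\<bar>y\<bar> < lam/2" for y
    using D that d2[of y] lam_pos unfolding M by auto
  have F00: "F 0 0 = 1" unfolding F_def by (simp add: prob_space)
  have F10: "F 1 0 = 1" unfolding F_def using E1 by simp
  define g where "g y = F 0 y - 1 - y - S * y^2" for y
  define g' where "g' y = F 1 y - 1 - 2 * S * y" for y
  have dg: "\<bar>y\<bar> < lam \<Longrightarrow> (g has_real_derivative g' y) (at y)" for y
    unfolding g_def g'_def using dF[of y 0]
    by (auto intro!: derivative_eq_intros simp: power2_eq_square)
  have dg': "\<bar>y\<bar> < lam \<Longrightarrow> (g' has_real_derivative F 2 y - 2 * S) (at y)" for y
    unfolding g'_def using dF[of y 1]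
    by (auto intro!: derivative_eq_intros simp: numeral_2_eq_2)
  have hl: "lam / 2 < lam" using lam_pos by simp
  have g0: "g 0 = 0" unfolding g_def using F00 by simp
  have g'0: "g' 0 = 0" unfolding g'_def using F10 by simp
  show ?thesis
  proof (cases "z = 0")
    case True then show ?thesis using F00 M by simp
  next
    case False
    show ?thesis
    proof (cases "z > 0")
      case True
      obtain \<eta> where eta: "0 < \<eta>" "\<eta> < z" "g z - g 0 = (z - 0) * g' \<eta>"
        using MVT2[OF True, of g g'] dg zb hl by force
      obtain \<xi> where xi: "0 < \<xi>" "\<xi> < \<eta>" "g' \<eta> - g' 0 = (\<eta> - 0) * (F 2 \<xi> - 2*S)"
        using MVT2[OF eta(1), of g' "\<lambda>y. F 2 y - 2 * S"] dg' eta zb hl by force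
      have "F 2 \<xi> \<le> 2 * S" using F2[of \<xi>] xi eta zb by auto
      then have "g' \<eta> \<le> 0" using xi g'0 eta by (simp add: mult_nonneg_nonpos)
      then have "g z \<le> 0" using eta g0 True by (simp add: mult_nonneg_nonpos)
      then show ?thesis unfolding g_def by (simp add: F_def)
    next
      case False
      with \<open>z \<noteq> 0\<close> have zn: "z < 0" by simp
      obtain \<eta> where eta: "z < \<eta>" "\<eta> < 0" "g 0 - g z = (0 - z) * g' \<eta>"
        using MVT2[OF zn, of g g'] dg zb hl by force
      obtain \<xi> where xi: "\<eta> < \<xi>" "\<xi> < 0" "g' 0 - g' \<eta> = (0 - \<eta>) * (F 2 \<xi> - 2*S)"
        using MVT2[OF eta(2), of g' "\<lambda>y. F 2 y - 2 * S"] dg' eta zb hl by force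
      have "F 2 \<xi> \<le> 2 * S" using F2[of \<xi>] xi eta zb by auto
      then have "g' \<eta> \<ge> 0" using xi g'0 eta by (simp add: mult_nonpos_nonpos)
      then have "g z \<le> 0" using eta g0 zn by (simp add: mult_nonpos_nonneg)
      then show ?thesis unfolding g_def by (simp add: F_def)
    qed
  qed
qed

end

lemma layer:
  fixes c g :: "'a \<Rightarrow> real"
  assumes "finite I" "\<forall>x\<in>I. g x \<ge> 0"
    and "\<forall>t>0. (\<Sum>x\<in>I. if g x \<ge> t then c x else 0) \<ge> 0"
  shows "(\<Sum>x\<in>I. c x * g x) \<ge> 0"
  using assms
proof (induction "card I" arbitrary: I g rule: less_induct)
  case less
  show ?case
  proof (cases "I = {}")
    case True then show ?thesis by simp
  next
    case ne: False
    define m where "m = Min (g ` I)"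
    have mI: "m \<in> g ` I" unfolding m_def using less.prems ne by auto
    have mle: "\<forall>x\<in>I. m \<le> g x" unfolding m_def using less.prems by auto
    have m0: "m \<ge> 0" using mI less.prems by auto
    define I' where "I' = {x\<in>I. g x > m}"
    have I'sub: "I' \<subset> I" using mI unfolding I'_def by auto
    have cardlt: "card I' < card I" using psubset_card_mono[OF less.prems(1) I'sub] .
    have fin': "finite I'" using I'sub less.prems(1) by (auto intro: finite_subset)
    have split: "(\<Sum>x\<in>I. c x * g x) = m * (\<Sum>x\<in>I. c x) + (\<Sum>x\<in>I. c x * (g x - m))"
      by (simp add: sum_distrib_left sum.distrib[symmetric] algebra_simps)
    have s1: "m * (\<Sum>x\<in>I. c x) \<ge> 0"
    proof (cases "m > 0")
      case True
      have "(\<Sum>x\<in>I. if g x \<ge> m then c x else 0) \<ge> 0" using less.prems(3) True by auto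
      moreover have "(\<Sum>x\<in>I. if g x \<ge> m then c x else 0) = (\<Sum>x\<in>I. c x)"
        using mle by (intro sum.cong) auto
      ultimately show ?thesis using m0 by simp
    next
      case False then show ?thesis using m0 by simp
    qed
    have eqI': "(\<Sum>x\<in>I. c x * (g x - m)) = (\<Sum>x\<in>I'. c x * (g x - m))"
      unfolding I'_def using less.prems(1) mle
      by (intro sum.mono_neutral_right) auto
    have s2: "(\<Sum>x\<in>I'. c x * (g x - m)) \<ge> 0"
    proof (rule less.hyps[OF cardlt fin'])
      show "\<forall>x\<in>I'. g x - m \<ge> 0" unfolding I'_def by auto
      show "\<forall>t>0. (\<Sum>x\<in>I'. if g x - m \<ge> t then c x else 0) \<ge> 0"
      proof (intro allI impI)
        fix t :: real assume t: "t > 0"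
        have "(\<Sum>x\<in>I'. if g x - m \<ge> t then c x else 0) = (\<Sum>x\<in>I. if g x \<ge> t + m then c x else 0)"
          unfolding I'_def using less.prems(1) t
          by (intro sum.mono_neutral_cong_left) auto
        also have "\<dots> \<ge> 0" using less.prems(3) t m0 by auto
        finally show "(\<Sum>x\<in>I'. if g x - m \<ge> t then c x else 0) \<ge> 0" .
      qed
    qed
    show ?thesis using split s1 s2 eqI' by simp
  qed
qed

lemma prob_pairs:
  fixes p b :: "nat \<Rightarrow> real"
  assumes sel: "\<forall>i<n. \<forall>j<n. sel i j \<in> {i, j} \<and> (b i < b j \<longrightarrow> sel i j = i) \<and> (b j < b i \<longrightarrow> sel i j = j)"
    and A: "A \<subseteq> {..<n}" and cl: "\<forall>k\<in>A. \<forall>l<n. l \<notin> A \<longrightarrow> b k < b l"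
    and p0: "\<forall>i<n. p i \<ge> 0" and p1: "(\<Sum>i<n. p i) = 1"
  shows "(\<Sum>i<n. \<Sum>j<n. if sel i j \<in> A then p i * p j else 0) \<ge> (\<Sum>k\<in>A. p k) * (2 - (\<Sum>k\<in>A. p k))"
proof -
  define q where "q = (\<Sum>k\<in>A. p k)"
  have pw: "(if sel i j \<in> A then p i * p j else 0) \<ge>
      (if i \<in> A then p i * p j else 0) + (if i \<notin> A \<and> j \<in> A then p i * p j else 0)"
    if "i < n" "j < n" for i j
  proof -
    have pp: "p i * p j \<ge> 0" using p0 that by auto
    consider "i \<in> A" "j \<in> A" | "i \<in> A" "j \<notin> A" | "i \<notin> A" "j \<in> A" | "i \<notin> A" "j \<notin> A" by blast
    then show ?thesis
    proof cases
      case 1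
      have "sel i j = i \<or> sel i j = j" using sel that by auto
      then have "sel i j \<in> A" using 1 by auto
      then show ?thesis using 1 by simp
    next
      case 2 then have "b i < b j" using cl that by auto
      then have "sel i j = i" using sel that by auto
      then show ?thesis using 2 by simp
    next
      case 3 then have "b j < b i" using cl that by auto
      then have "sel i j = j" using sel that by auto
      then show ?thesis using 3 by simp
    next
      case 4 then show ?thesis using pp by simp
    qed
  qed
  have "(\<Sum>i<n. \<Sum>j<n. if sel i j \<in> A then p i * p j else 0) \<ge>
      (\<Sum>i<n. \<Sum>j<n. (if i \<in> A then p i * p j else 0) + (if i \<notin> A \<and> j \<in> A then p i * p j else 0))"
    using pw by (intro sum_mono) auto
  also have "(\<Sum>i<n. \<Sum>j<n. (if i \<in> A then p i * p j else 0) + (if i \<notin> A \<and> j \<in> A then p i * p j else 0))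
      = (\<Sum>i<n. \<Sum>j<n. (if i \<in> A then p i else 0) * p j + (if i \<notin> A then p i else 0) * (if j \<in> A then p j else 0))"
    by (intro sum.cong refl) auto
  also have "\<dots> = (\<Sum>i<n. (if i \<in> A then p i else 0) * (\<Sum>j<n. p j) + (if i \<notin> A then p i else 0) * (\<Sum>j<n. if j \<in> A then p j else 0))"
    by (simp only: sum.distrib sum_distrib_left)
  also have "\<dots> = (\<Sum>i<n. (if i \<in> A then p i else 0)) * (\<Sum>j<n. p j) + (\<Sum>i<n. if i \<notin> A then p i else 0) * (\<Sum>j<n. if j \<in> A then p j else 0)"
    by (simp only: sum.distrib sum_distrib_right)
  also have "\<dots> = q + (1 - q) * q"
  proof -
    have a: "(\<Sum>i<n. if i \<in> A then p i else 0) = q" unfolding q_def using A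
      by (simp add: sum.If_cases Int_absorb1 inf.absorb2)
    have b: "(\<Sum>i<n. if i \<notin> A then p i else 0) = 1 - q"
    proof -
      have "(\<Sum>i<n. if i \<notin> A then p i else 0) + (\<Sum>i<n. if i \<in> A then p i else 0) = (\<Sum>i<n. p i)"
        by (simp add: sum.distrib[symmetric]) (rule sum.cong, auto)
      then show ?thesis using a p1 by simp
    qed
    show ?thesis using a b p1 by simp
  qed
  finally show ?thesis unfolding q_def by (simp add: algebra_simps)
qed


lemma sum_list_concat': "sum_list (concat xss) = sum_list (map sum_list xss)" for xss :: "real list list"
  by (induct xss) auto

lemma length_filter_rep: "length (filter P (replicate m c)) = (if P c then m else 0)"
  by (induct m) auto

lemma sum_list_map_concat_rep:
  "sum_list (map f (concat (map (\<lambda>i. replicate (Nw i) (y i)) [0..<n]))) = (\<Sum>i<n. real (Nw i) * f (y i))"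
  for f :: "real \<Rightarrow> real"
  by (simp add: map_concat sum_list_concat' comp_def sum_list_replicate interv_sum_list_conv_sum_set_nat atLeast0LessThan)

lemma length_filter_concat_rep:
  "length (filter P (concat (map (\<lambda>i. replicate (Nw i) (y i)) [0..<n]))) = (\<Sum>i<n. if P (y i) then Nw i else 0)"
  by (simp add: filter_concat length_concat comp_def length_filter_rep interv_sum_list_conv_sum_set_nat atLeast0LessThan)

lemma psi_eq:
  "Psi a (slot_vec n Nw w) = (\<Sum>i<n. real (Nw i) * exp (- a * (bval Nw w i - (\<Sum>k<n. w k) / real (Ntot n Nw))))"
proof -
  let ?L = "concat (map (\<lambda>i. replicate (Nw i) (bval Nw w i - (\<Sum>k<n. w k) / real (Ntot n Nw))) [0..<n])"
  have "sum_list (map (\<lambda>y. exp (- a * y)) (rev (sort ?L))) = sum_list (map (\<lambda>y. exp (- a * y)) ?L)"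
  proof -
    have "sum_list (map (\<lambda>y. exp (- a * y)) (rev (sort ?L))) = sum_mset (mset (map (\<lambda>y. exp (- a * y)) (rev (sort ?L))))"
      by (simp only: sum_mset_sum_list)
    also have "\<dots> = sum_mset (mset (map (\<lambda>y. exp (- a * y)) ?L))" by simp
    also have "\<dots> = sum_list (map (\<lambda>y. exp (- a * y)) ?L)" by (simp only: sum_mset_sum_list)
    finally show ?thesis .
  qed
  then show ?thesis unfolding Psi_def slot_vec_def by (simp add: sum_list_map_concat_rep)
qed

lemma neg_count:
  assumes N1: "Ntot n Nw \<ge> 1"
    and sl: "slot_at (slot_vec n Nw w) (nat \<lceil>real (Ntot n Nw) / 4\<rceil>) \<ge> 0"
  shows "(\<Sum>i<n. if bval Nw w i - (\<Sum>k<n. w k) / real (Ntot n Nw) < 0 then real (Nw i) else 0)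
          \<le> 3/4 * real (Ntot n Nw)"
proof -
  define y where "y i = bval Nw w i - (\<Sum>k<n. w k) / real (Ntot n Nw)" for i
  define L where "L = concat (map (\<lambda>i. replicate (Nw i) (y i)) [0..<n])"
  define s where "s = rev (sort L)"
  define K where "K = nat \<lceil>real (Ntot n Nw) / 4\<rceil>"
  define Nn where "Nn = Ntot n Nw"
  have sv: "slot_vec n Nw w = s" unfolding s_def L_def y_def slot_vec_def by simp
  have lenL: "length L = Nn" unfolding L_def Nn_def Ntot_def
    by (simp add: length_concat comp_def interv_sum_list_conv_sum_set_nat atLeast0LessThan)
  have lens: "length s = Nn" unfolding s_def using lenL by simp
  have c1: "1 \<le> \<lceil>real Nn / 4\<rceil>" using N1 unfolding Nn_def by simp
  have K1: "K \<ge> 1" unfolding K_def Nn_def[symmetric] using c1 by (simp add: le_nat_iff)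
  have KN: "real K \<ge> real Nn / 4" unfolding K_def Nn_def by linarith
  have KN2: "K \<le> Nn" unfolding K_def Nn_def using N1 by (simp add: nat_le_iff ceiling_le_iff) 
  have sK: "s ! (K - 1) \<ge> 0" using sl unfolding sv slot_at_def K_def .
  have sorted: "sorted (sort L)" by simp
  have nonneg: "s ! i \<ge> 0" if "i < K" for i
  proof -
    have "s ! i = sort L ! (Nn - 1 - i)" unfolding s_def using that KN2 lenL by (simp add: rev_nth)
    moreover have "s ! (K - 1) = sort L ! (Nn - 1 - (K - 1))" unfolding s_def using K1 KN2 lenL by (simp add: rev_nth)
    moreover have "sort L ! (Nn - 1 - (K - 1)) \<le> sort L ! (Nn - 1 - i)"
      using sorted that K1 KN2 lenL by (intro sorted_nth_mono) auto
    ultimately show ?thesis using sK by simp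
  qed
  have "filter (\<lambda>x. x < 0) (take K s) = []"
    using nonneg by (auto simp: filter_empty_conv in_set_conv_nth) (metis not_le)
  then have "filter (\<lambda>x. x < 0) s = filter (\<lambda>x. x < 0) (drop K s)"
  proof -
    have "filter (\<lambda>x. x < 0) s = filter (\<lambda>x. x < 0) (take K s @ drop K s)" by simp
    also have "\<dots> = filter (\<lambda>x. x < 0) (take K s) @ filter (\<lambda>x. x < 0) (drop K s)" by (rule filter_append)
    finally show ?thesis using \<open>filter (\<lambda>x. x < 0) (take K s) = []\<close> by simp
  qed
  then have "length (filter (\<lambda>x. x < 0) s) \<le> Nn - K"
  proof -
    have "length (filter (\<lambda>x. x < 0) (drop K s)) \<le> length (drop K s)" by (rule length_filter_le)
    then show ?thesis using \<open>filter (\<lambda>x. x < 0) s = filter (\<lambda>x. x < 0) (drop K s)\<close> lens by simp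
  qed
  moreover have "length (filter (\<lambda>x. x < 0) s) = length (filter (\<lambda>x. x < 0) L)"
  proof -
    have "mset (filter (\<lambda>x. x < 0) s) = mset (filter (\<lambda>x. x < 0) L)" unfolding s_def by (simp add: mset_filter)
    then have "size (mset (filter (\<lambda>x. x < 0) s)) = size (mset (filter (\<lambda>x. x < 0) L))" by (rule arg_cong)
    then show ?thesis by (simp only: size_mset)
  qed
  moreover have "length (filter (\<lambda>x. x < 0) L) = (\<Sum>i<n. if y i < 0 then Nw i else 0)"
    unfolding L_def by (rule length_filter_concat_rep)
  ultimately have c1: "(\<Sum>i<n. if y i < 0 then Nw i else 0) \<le> Nn - K" by simp
  define cnt where "cnt = (\<Sum>i<n. if y i < 0 then Nw i else 0)"
  have c2: "cnt \<le> Nn - K" using c1 unfolding cnt_def .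
  have c3: "real cnt \<le> real Nn - real K" using c2 KN2 by (simp add: of_nat_diff[symmetric] del: of_nat_diff)
  have c4: "real cnt = (\<Sum>i<n. if y i < 0 then real (Nw i) else 0)"
    unfolding cnt_def of_nat_sum by (intro sum.cong) auto
  have "(\<Sum>i<n. if y i < 0 then real (Nw i) else 0) \<le> 3/4 * real Nn" using c3 c4 KN by linarith
  then show ?thesis by (simp only: y_def Nn_def)
qed


lemma step_formula:
  assumes k: "k < n" and Nk: "Nw k > 0"
  shows "Psi a (slot_vec n Nw (w(k := w k + x))) =
    exp ((a / real (Ntot n Nw)) * x) * ((\<Sum>l<n. real (Nw l) * exp (- a * (bval Nw w l - (\<Sum>m<n. w m) / real (Ntot n Nw))))
      + real (Nw k) * exp (- a * (bval Nw w k - (\<Sum>m<n. w m) / real (Ntot n Nw))) * (exp (- (a / real (Nw k)) * x) - 1))"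
proof -
  define N where "N = real (Ntot n Nw)"
  define T where "T = (\<Sum>m<n. w m)"
  define w' where "w' = w(k := w k + x)"
  define y where "y l = bval Nw w l - T / N" for l
  define E1 where "E1 = exp ((a / N) * x)"
  define E2 where "E2 = exp (- (a / real (Nw k)) * x)"
  have sw: "(\<Sum>m<n. w' m) = T + x"
  proof -
    have "(\<Sum>m<n. w' m) = (\<Sum>m<n. w m + (if m = k then x else 0))"
      unfolding w'_def by (intro sum.cong) auto
    also have "\<dots> = T + x" unfolding T_def using k by (simp add: sum.distrib)
    finally show ?thesis .
  qed
  have tm: "real (Nw l) * exp (- a * (bval Nw w' l - (T + x) / N)) =
      E1 * (real (Nw l) * exp (- a * y l)) + (if l = k then E1 * (real (Nw k) * exp (- a * y k)) * (E2 - 1) else 0)" for l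
  proof (cases "l = k")
    case True
    have "bval Nw w' l = bval Nw w k + x / real (Nw k)" using True Nk unfolding bval_def w'_def by (simp add: add_divide_distrib)
    then have "- a * (bval Nw w' l - (T + x) / N) = - a * y k + (a / N) * x + (- (a / real (Nw k)) * x)"
      unfolding y_def by (simp add: add_divide_distrib algebra_simps)
    then have "exp (- a * (bval Nw w' l - (T + x) / N)) = exp (- a * y k) * E1 * E2"
      unfolding E1_def E2_def by (simp only: exp_add)
    then show ?thesis using True by (simp add: algebra_simps)
  next
    case False
    have "bval Nw w' l = bval Nw w l" using False unfolding bval_def w'_def by simp
    then have "- a * (bval Nw w' l - (T + x) / N) = - a * y l + (a / N) * x"
      unfolding y_def by (simp add: add_divide_distrib algebra_simps)
    then have "exp (- a * (bval Nw w' l - (T + x) / N)) = exp (- a * y l) * E1"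
      unfolding E1_def by (simp only: exp_add)
    then show ?thesis using False by (simp add: algebra_simps)
  qed
  have "Psi a (slot_vec n Nw w') = (\<Sum>l<n. real (Nw l) * exp (- a * (bval Nw w' l - (T + x) / N)))"
    unfolding psi_eq sw N_def ..
  also have "\<dots> = (\<Sum>l<n. E1 * (real (Nw l) * exp (- a * y l)) + (if l = k then E1 * (real (Nw k) * exp (- a * y k)) * (E2 - 1) else 0))"
    using tm by simp
  also have "\<dots> = E1 * (\<Sum>l<n. real (Nw l) * exp (- a * y l)) + E1 * (real (Nw k) * exp (- a * y k)) * (E2 - 1)"
    using k by (simp add: sum.distrib sum_distrib_left)
  finally show ?thesis unfolding w'_def E1_def E2_def y_def T_def N_def by (simp add: algebra_simps)
qed

lemma aux_br0:
  fixes x m p q r xm :: real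
  shows "p \<le> x \<Longrightarrow> q = 2 * x + xm \<Longrightarrow> r = x + xm \<Longrightarrow> q \<le> m / 4 \<Longrightarrow> - m / 4 + p + r \<le> 0"
  by linarith

lemma aux_br:
  fixes x m N :: real
  shows "x / N \<le> x \<Longrightarrow> x * (2 + m) = 2 * x + x * m \<Longrightarrow> x * (1 + m) = x + x * m \<Longrightarrow> x * (2 + m) \<le> m / 4
    \<Longrightarrow> - m / 4 + x / N + x * (1 + m) \<le> 0"
  by (rule aux_br0)

theorem mainTheorem12:
  fixes S \<mu> :: real
  assumes "S \<ge> 1" and "\<mu> > 0"
  shows "\<exists>a0 > 0. \<forall>(n::nat) (Nw::nat \<Rightarrow> nat) (p::nat \<Rightarrow> real) (W::real measure)
           (\<alpha>::real) (\<beta>::real) (lam::real) (a::real) (w::nat \<Rightarrow> real) (sel::nat \<Rightarrow> nat \<Rightarrow> nat).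
     n \<ge> 1 \<and> (\<forall>i<n. Nw i > 0)
     \<and> \<alpha> \<ge> 1 \<and> \<beta> \<ge> 1 \<and> 1 / \<alpha>^2 \<ge> 4/5 + \<mu>
     \<and> (\<forall>i<n. p i \<ge> 0) \<and> (\<Sum>i<n. p i) = 1
     \<and> (\<forall>i<n. real (Nw i) / (\<alpha> * real (Ntot n Nw)) \<le> p i
              \<and> p i \<le> \<beta> * real (Nw i) / real (Ntot n Nw))
     \<and> prob_space W \<and> sets W = sets borel \<and> (AE x in W. x \<ge> 0)
     \<and> integrable W (\<lambda>x. x) \<and> integral\<^sup>L W (\<lambda>x. x) = 1
     \<and> lam > 0 \<and> integrable W (\<lambda>x. exp (lam * x))
     \<and> (\<forall>z. \<bar>z\<bar> < lam / 2 \<longrightarrow> deriv (deriv (mgf W)) z \<le> 2 * S)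
     \<and> 0 < a \<and> a \<le> min a0 (lam / 2)
     \<and> (\<forall>i<n. w i \<ge> 0)
     \<and> valid_sel n Nw w sel
     \<and> slot_at (slot_vec n Nw w) (nat \<lceil>real (Ntot n Nw) / 4\<rceil>) \<ge> 0
     \<longrightarrow> step_exp n Nw p W sel a w
           \<le> (1 - 3 * \<mu> * a / (4 * real (Ntot n Nw))) * Psi a (slot_vec n Nw w) + 1"
proof -
  have S0: "S > 0" using assms by simp
  define a0 where "a0 = min (\<mu> / (4 * S * (2 + \<mu>))) (1 / (1 + \<mu>))"
  have a0pos: "a0 > 0" unfolding a0_def using S0 assms by auto
  show ?thesis
  proof (intro exI[of _ a0] conjI a0pos allI impI)
    fix n :: nat and Nw :: "nat \<Rightarrow> nat" and p :: "nat \<Rightarrow> real" and W :: "real measure"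
      and \<alpha> \<beta> lam a :: real and w :: "nat \<Rightarrow> real" and sel :: "nat \<Rightarrow> nat \<Rightarrow> nat"
    assume H: "n \<ge> 1 \<and> (\<forall>i<n. Nw i > 0)
     \<and> \<alpha> \<ge> 1 \<and> \<beta> \<ge> 1 \<and> 1 / \<alpha>^2 \<ge> 4/5 + \<mu>
     \<and> (\<forall>i<n. p i \<ge> 0) \<and> (\<Sum>i<n. p i) = 1
     \<and> (\<forall>i<n. real (Nw i) / (\<alpha> * real (Ntot n Nw)) \<le> p i
              \<and> p i \<le> \<beta> * real (Nw i) / real (Ntot n Nw))
     \<and> prob_space W \<and> sets W = sets borel \<and> (AE x in W. x \<ge> 0)
     \<and> integrable W (\<lambda>x. x) \<and> integral\<^sup>L W (\<lambda>x. x) = 1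
     \<and> lam > 0 \<and> integrable W (\<lambda>x. exp (lam * x))
     \<and> (\<forall>z. \<bar>z\<bar> < lam / 2 \<longrightarrow> deriv (deriv (mgf W)) z \<le> 2 * S)
     \<and> 0 < a \<and> a \<le> min a0 (lam / 2)
     \<and> (\<forall>i<n. w i \<ge> 0)
     \<and> valid_sel n Nw w sel
     \<and> slot_at (slot_vec n Nw w) (nat \<lceil>real (Ntot n Nw) / 4\<rceil>) \<ge> 0"
    then have n1: "n \<ge> 1" and Nwpos: "\<forall>i<n. Nw i > 0" and al1: "\<alpha> \<ge> 1"
      and alb: "1 / \<alpha>^2 \<ge> 4/5 + \<mu>" and p0: "\<forall>i<n. p i \<ge> 0" and p1: "(\<Sum>i<n. p i) = 1"
      and plb: "\<forall>i<n. real (Nw i) / (\<alpha> * real (Ntot n Nw)) \<le> p i"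
      and ps: "prob_space W" and sW: "sets W = sets borel" and nn: "AE x in W. x \<ge> 0"
      and E1: "integral\<^sup>L W (\<lambda>x. x) = 1" and lam: "lam > 0" and ilam: "integrable W (\<lambda>x. exp (lam * x))"
      and D: "\<forall>z. \<bar>z\<bar> < lam / 2 \<longrightarrow> deriv (deriv (mgf W)) z \<le> 2 * S"
      and a0: "0 < a" and aa0: "a \<le> a0" and alam: "a \<le> lam / 2"
      and vs: "valid_sel n Nw w sel"
      and sl: "slot_at (slot_vec n Nw w) (nat \<lceil>real (Ntot n Nw) / 4\<rceil>) \<ge> 0"
      by auto
    interpret mgfW W lam using ps sW nn lam ilam by (simp add: mgfW_def mgfW_axioms_def)
    have mgf_eq: "mgf W = (\<lambda>z. \<integral>x. exp (z*x) \<partial>W)" by (rule ext) (simp add: mgf_def)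
    have Mb: "mgf W z \<le> 1 + z + S * z^2" if "\<bar>z\<bar> \<le> lam / 2" for z
      using mgf_taylor[OF E1 _ that, of S] D unfolding mgf_eq by simp
    have int_exp: "integrable W (\<lambda>x. exp (r * x))" if "r < lam" for r
      using int_pow_exp[OF that, of 0] by simp
    define N where "N = real (Ntot n Nw)"
    define T where "T = (\<Sum>m<n. w m)"
    define y where "y k = bval Nw w k - T / N" for k
    define e where "e k = exp (- a * y k)" for k
    define \<Psi> where "\<Psi> = (\<Sum>k<n. real (Nw k) * e k)"
    have Nsum: "N = (\<Sum>k<n. real (Nw k))" unfolding N_def Ntot_def by simp
    have N1: "Ntot n Nw \<ge> 1"
    proof -
      have "Nw 0 \<le> Ntot n Nw" unfolding Ntot_def using n1 by (intro member_le_sum) auto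
      then show ?thesis using Nwpos n1 by fastforce
    qed
    have Npos: "N \<ge> 1" unfolding N_def using N1 by simp
    have psi: "Psi a (slot_vec n Nw w) = \<Psi>" unfolding psi_eq \<Psi>_def e_def y_def T_def N_def ..
    have e0: "e k > 0" for k unfolding e_def by simp
    have \<Psi>0: "\<Psi> \<ge> 0" unfolding \<Psi>_def using e0 by (intro sum_nonneg) (simp add: less_imp_le)
    have d4: "4 * S * (2 + \<mu>) > 0" using S0 assms by simp
    have Sa: "S * a * (2 + \<mu>) \<le> \<mu> / 4"
    proof -
      have "a \<le> \<mu> / (4 * S * (2 + \<mu>))" using aa0 unfolding a0_def min.bounded_iff by blast
      then have "a * (4 * S * (2 + \<mu>)) \<le> \<mu>" using pos_le_divide_eq[OF d4] by blast
      then show ?thesis by (simp add: algebra_simps)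
    qed
    have Sa1: "S * a \<le> 1"
    proof -
      have m4: "\<mu> / 4 \<le> (1/4) * (2 + \<mu>)" by simp
      have "(S * a) * (2 + \<mu>) \<le> (1/4) * (2 + \<mu>)" using order_trans[OF Sa m4] by simp
      moreover have p2: "0 < 2 + \<mu>" using assms by simp
      ultimately have "S * a \<le> 1/4" by (rule mult_right_le_imp_le)
      then show ?thesis by simp
    qed
    have amu: "a * (1 + \<mu>) \<le> 1"
    proof -
      have d1: "1 + \<mu> > 0" using assms by simp
      have "a \<le> 1 / (1 + \<mu>)" using aa0 unfolding a0_def min.bounded_iff by blast
      then show ?thesis using pos_le_divide_eq[OF d1] by blast
    qed
    define B where "B = 1 + a / N + S * (a / N)^2"
    have Dk: "(\<integral>x. Psi a (slot_vec n Nw (w(k := w k + x))) \<partial>W) \<le> \<Psi> * B - a * (1 - S * a) * e k"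
      if k: "k < n" for k
    proof -
      define Nk where "Nk = real (Nw k)"
      have Nk1: "Nk \<ge> 1" unfolding Nk_def using Nwpos k by (simp add: Suc_le_eq)
      define c where "c = Nk * e k"
      have c0: "c \<ge> 0" unfolding c_def using Nk1 e0[of k] by simp
      have r1': "a / N \<le> a" using a0 Npos by (simp add: divide_le_eq)
      have r1: "a / N < lam" using r1' alam lam by linarith
      have r2: "a / Nk \<le> a" using a0 Nk1 by (simp add: divide_le_eq)
      have r2': "a / Nk \<ge> 0" using a0 Nk1 by simp
      have r3: "a / N - a / Nk < lam" using r1 r2' by linarith
      have r4: "- (a / Nk) < lam" using r2' lam by linarith
      have feq: "(\<lambda>x. Psi a (slot_vec n Nw (w(k := w k + x)))) =
          (\<lambda>x. \<Psi> * exp ((a / N) * x) + c * (exp ((a / N - a / Nk) * x) - exp ((a / N) * x)))"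
      proof
        fix x
        have "exp ((a / N - a / Nk) * x) = exp ((a / N) * x) * exp (- (a / Nk) * x)"
          by (simp add: exp_add[symmetric] algebra_simps)
        then show "Psi a (slot_vec n Nw (w(k := w k + x))) = \<Psi> * exp ((a / N) * x) + c * (exp ((a / N - a / Nk) * x) - exp ((a / N) * x))"
          unfolding step_formula[where k=k and n=n and Nw=Nw and a=a and w=w and x=x, OF k Nwpos[rule_format, OF k]]
          unfolding \<Psi>_def c_def e_def y_def T_def N_def Nk_def by (simp add: algebra_simps)
      qed
      have i1: "integrable W (\<lambda>x. exp ((a / N) * x))" using int_exp[OF r1] .
      have i2: "integrable W (\<lambda>x. exp ((a / N - a / Nk) * x))" using int_exp[OF r3] .
      have i3: "integrable W (\<lambda>x. exp (- (a / Nk) * x))" using int_exp[OF r4] .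
      have "(\<integral>x. Psi a (slot_vec n Nw (w(k := w k + x))) \<partial>W)
          = \<Psi> * mgf W (a / N) + c * (\<integral>x. exp ((a / N - a / Nk) * x) - exp ((a / N) * x) \<partial>W)"
        unfolding feq mgf_def using i1 i2 by simp
      also have "(\<integral>x. exp ((a / N - a / Nk) * x) - exp ((a / N) * x) \<partial>W) \<le> (\<integral>x. exp (- (a / Nk) * x) - 1 \<partial>W)"
      proof (rule integral_mono_AE)
        show "integrable W (\<lambda>x. exp ((a / N - a / Nk) * x) - exp ((a / N) * x))" using i1 i2 by simp
        show "integrable W (\<lambda>x. exp (- (a / Nk) * x) - 1)" using i3 by simp
        show "AE x in W. exp ((a / N - a / Nk) * x) - exp ((a / N) * x) \<le> exp (- (a / Nk) * x) - 1"
          using nn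
        proof eventually_elim
          fix x :: real assume x: "0 \<le> x"
          have E1: "exp ((a / N) * x) \<ge> 1" using x a0 Npos by simp
          have E2: "exp (- (a / Nk) * x) \<le> 1" using x a0 Nk1 by simp
          have "exp ((a / N - a / Nk) * x) - exp ((a / N) * x) = exp ((a / N) * x) * (exp (- (a / Nk) * x) - 1)"
            by (simp add: exp_add[symmetric] algebra_simps)
          also have "\<dots> \<le> 1 * (exp (- (a / Nk) * x) - 1)" using E1 E2
            by (intro mult_right_mono_neg) auto
          finally show "exp ((a / N - a / Nk) * x) - exp ((a / N) * x) \<le> exp (- (a / Nk) * x) - 1" by simp
        qed
      qed
      then have "\<Psi> * mgf W (a / N) + c * (\<integral>x. exp ((a / N - a / Nk) * x) - exp ((a / N) * x) \<partial>W)
          \<le> \<Psi> * mgf W (a / N) + c * (\<integral>x. exp (- (a / Nk) * x) - 1 \<partial>W)"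
        using c0 by (simp add: mult_left_mono)
      also have "(\<integral>x. exp (- (a / Nk) * x) - 1 \<partial>W) = mgf W (- (a / Nk)) - 1"
        unfolding mgf_def using i3 by (simp add: prob_space)
      also have "\<Psi> * mgf W (a / N) + c * (mgf W (- (a / Nk)) - 1) \<le> \<Psi> * B + c * (- (a / Nk) + S * (a / Nk)^2)"
      proof -
        have an: "a / N \<ge> 0" using a0 Npos by simp
        have ab1: "\<bar>a / N\<bar> \<le> lam / 2" using abs_of_nonneg[OF an] r1' alam by linarith
        have "mgf W (a / N) \<le> 1 + a / N + S * (a / N)^2" using Mb[OF ab1] .
        then have m1: "\<Psi> * mgf W (a / N) \<le> \<Psi> * B" unfolding B_def using \<Psi>0 by (simp add: mult_left_mono)
        have ab2: "\<bar>- (a / Nk)\<bar> \<le> lam / 2" using abs_of_nonneg[OF r2'] r2 alam by (simp only: abs_minus_cancel)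
        have "mgf W (- (a / Nk)) \<le> 1 + (- (a / Nk)) + S * (- (a / Nk))^2" using Mb[OF ab2] .
        then have m2: "c * (mgf W (- (a / Nk)) - 1) \<le> c * (- (a / Nk) + S * (a / Nk)^2)" using c0
          by (intro mult_left_mono) auto
        show ?thesis using m1 m2 by linarith
      qed
      also have "c * (- (a / Nk) + S * (a / Nk)^2) \<le> - a * (1 - S * a) * e k"
      proof -
        have "c * (- (a / Nk) + S * (a / Nk)^2) = e k * (- a + S * a^2 / Nk)"
          unfolding c_def using Nk1 by (simp add: field_simps power2_eq_square)
        also have sa2: "S * a^2 \<ge> 0" using S0 by simp
        have "S * a^2 / Nk \<le> S * a^2 / 1" using divide_left_mono[OF Nk1 sa2] Nk1 by simp
        then have "e k * (- a + S * a^2 / Nk) \<le> e k * (- a + S * a^2)" using e0[of k] by (intro mult_left_mono) auto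
        also have "\<dots> = - a * (1 - S * a) * e k" by (simp add: algebra_simps power2_eq_square)
        finally show ?thesis .
      qed
      finally show ?thesis by linarith
    qed
    have selk: "sel i j < n" if "i < n" "j < n" for i j
    proof -
      have "sel i j = i \<or> sel i j = j" using vs that unfolding valid_sel_def by auto
      then show ?thesis using that by auto
    qed
    have pp0: "p i * p j \<ge> 0" if "i < n" "j < n" for i j using p0 that by simp
    define Q where "Q = (\<Sum>i<n. \<Sum>j<n. p i * p j * e (sel i j))"
    have pp1: "(\<Sum>i<n. \<Sum>j<n. p i * p j) = 1" using p1 by (simp add: sum_product[symmetric])
    have step: "step_exp n Nw p W sel a w \<le> \<Psi> * B - a * (1 - S * a) * Q"
    proof -
      have "step_exp n Nw p W sel a w = (\<Sum>i<n. \<Sum>j<n. p i * p j *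
          (\<integral>x. Psi a (slot_vec n Nw (w(sel i j := w (sel i j) + x))) \<partial>W))"
        unfolding step_exp_def ..
      also have "\<dots> \<le> (\<Sum>i<n. \<Sum>j<n. p i * p j * (\<Psi> * B - a * (1 - S * a) * e (sel i j)))"
        by (intro sum_mono mult_left_mono Dk selk pp0) auto
      also have "\<dots> = (\<Sum>i<n. \<Sum>j<n. \<Psi> * B * (p i * p j) - a * (1 - S * a) * (p i * p j * e (sel i j)))"
        by (intro sum.cong refl) (simp add: algebra_simps)
      also have "\<dots> = \<Psi> * B * (\<Sum>i<n. \<Sum>j<n. p i * p j) - a * (1 - S * a) * Q"
        unfolding Q_def by (simp add: sum_subtractf sum_distrib_left)
      finally show ?thesis using pp1 by simp
    qed
    define g where "g k = max (e k - 1) 0" for k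
    have g0: "g k \<ge> 0" for k unfolding g_def by simp
    have eg: "g k \<le> e k" for k unfolding g_def using e0[of k] by simp
    have eg1: "e k \<le> g k + 1" for k unfolding g_def by simp
    define Q' where "Q' = (\<Sum>i<n. \<Sum>j<n. p i * p j * g (sel i j))"
    have QQ': "Q' \<le> Q" unfolding Q_def Q'_def by (intro sum_mono mult_left_mono eg pp0) auto
    define G where "G = (\<Sum>k<n. real (Nw k) * g k)"
    have PsiG: "\<Psi> \<le> G + N"
    proof -
      have "\<Psi> \<le> (\<Sum>k<n. real (Nw k) * g k + real (Nw k))"
        unfolding \<Psi>_def
      proof (intro sum_mono)
        fix k
        show "real (Nw k) * e k \<le> real (Nw k) * g k + real (Nw k)"
          using mult_left_mono[OF eg1[of k], of "real (Nw k)"] by (simp add: distrib_left)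
      qed
      also have "\<dots> = G + N" unfolding G_def Nsum by (simp add: sum.distrib)
      finally show ?thesis .
    qed
    have clos: "bval Nw w k < bval Nw w l" if "g l < g k" for k l
    proof -
      have "y k < y l"
      proof (rule ccontr)
        assume "\<not> y k < y l"
        then have "- a * y k \<le> - a * y l" using a0 by simp
        then have "e k \<le> e l" unfolding e_def by simp
        then have "g k \<le> g l" unfolding g_def by simp
        then show False using that by simp
      qed
      then show ?thesis unfolding y_def by simp
    qed
    have negc: "(\<Sum>k<n. if y k < 0 then real (Nw k) else 0) \<le> 3/4 * N"
      using neg_count[OF N1 sl] unfolding y_def T_def N_def .
    have u: "1/\<alpha> > 0" "1/\<alpha> \<le> 1" "(1/\<alpha>)^2 \<ge> 4/5 + \<mu>" using al1 alb by (auto simp: power_one_over)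
    have keyu: "2 * (1/\<alpha>) - 3/4 * (1/\<alpha>)^2 \<ge> 1 + \<mu>"
    proof -
      define u where "u = 1/\<alpha>"
      have u1: "u > 0" "u \<le> 1" "u^2 \<ge> 4/5 + \<mu>" using u unfolding u_def by auto
      have u45: "u \<ge> 4/5"
      proof (rule ccontr)
        assume "\<not> u \<ge> 4/5"
        then have "u * u < 4/5 * (4/5)" using u1 by (intro mult_strict_mono) auto
        then show False using u1 assms by (simp add: power2_eq_square)
      qed
      have "(u - 4/5) * (1 - u) \<ge> 0" using u45 u1 by simp
      moreover have "(u - 4/5) * (1 - u) = - (u * u) + 9/5 * u - 4/5" by (simp add: field_simps)
      ultimately have "u * u \<le> 9/5 * u - 4/5" by linarith
      then have "2 * u - 3/4 * (u * u) \<ge> 1 + \<mu>" using u1 unfolding power2_eq_square by linarith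
      then show ?thesis unfolding u_def[symmetric] power2_eq_square .
    qed
    have layer_res: "(1 + \<mu>) * G \<le> N * Q'"
    proof -
      define I where "I = ({..<n} \<times> {..<n}) <+> {..<n}"
      define cc where "cc = case_sum (\<lambda>(i, j). p i * p j) (\<lambda>k. - ((1 + \<mu>) / N) * real (Nw k))"
      define GG where "GG = case_sum (\<lambda>(i, j). g (sel i j)) g"
      have finI: "finite I" unfolding I_def by simp
      have sumI: "(\<Sum>x\<in>I. h x) = (\<Sum>i<n. \<Sum>j<n. h (Inl (i, j))) + (\<Sum>k<n. h (Inr k))" for h :: "(nat \<times> nat) + nat \<Rightarrow> real"
        unfolding I_def by (simp add: sum.Plus sum.cartesian_product comp_def)
      have L: "(\<Sum>x\<in>I. cc x * GG x) \<ge> 0"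
      proof (rule layer[OF finI])
        show "\<forall>x\<in>I. GG x \<ge> 0" unfolding GG_def using g0 by (auto split: sum.split)
        show "\<forall>t>0. (\<Sum>x\<in>I. if GG x \<ge> t then cc x else 0) \<ge> 0"
        proof (intro allI impI)
          fix t :: real assume t: "t > 0"
          define A where "A = {k \<in> {..<n}. g k \<ge> t}"
          have Asub: "A \<subseteq> {..<n}" unfolding A_def by auto
          define q where "q = (\<Sum>k\<in>A. p k)"
          define F where "F = (\<Sum>k\<in>A. real (Nw k))"
          have s1: "(\<Sum>i<n. \<Sum>j<n. (\<lambda>x. if GG x \<ge> t then cc x else 0) (Inl (i, j)))
              = (\<Sum>i<n. \<Sum>j<n. if sel i j \<in> A then p i * p j else 0)"
            unfolding GG_def cc_def A_def by (intro sum.cong refl) (auto simp: selk)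
          have s2: "(\<Sum>k<n. (\<lambda>x. if GG x \<ge> t then cc x else 0) (Inr k)) = - ((1 + \<mu>) / N) * F"
          proof -
            have "(\<Sum>k<n. (\<lambda>x. if GG x \<ge> t then cc x else 0) (Inr k)) = (\<Sum>k<n. - ((1 + \<mu>) / N) * (if g k \<ge> t then real (Nw k) else 0))"
              unfolding GG_def cc_def by (intro sum.cong refl) auto
            also have "\<dots> = - ((1 + \<mu>) / N) * (\<Sum>k<n. if g k \<ge> t then real (Nw k) else 0)"
              by (rule sum_distrib_left[symmetric])
            also have "(\<Sum>k<n. if g k \<ge> t then real (Nw k) else 0) = F"
              unfolding F_def A_def by (rule sum.inter_filter[symmetric]) simp
            finally show ?thesis .
          qed
          have pr: "(\<Sum>i<n. \<Sum>j<n. if sel i j \<in> A then p i * p j else 0) \<ge> q * (2 - q)"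
            unfolding q_def
          proof (rule prob_pairs[where b = "bval Nw w"])
            show "\<forall>i<n. \<forall>j<n. sel i j \<in> {i, j} \<and> (bval Nw w i < bval Nw w j \<longrightarrow> sel i j = i) \<and> (bval Nw w j < bval Nw w i \<longrightarrow> sel i j = j)"
              using vs unfolding valid_sel_def .
            show "A \<subseteq> {..<n}" by (rule Asub)
            show "\<forall>k\<in>A. \<forall>l<n. l \<notin> A \<longrightarrow> bval Nw w k < bval Nw w l"
              unfolding A_def by (auto intro!: clos)
          qed (use p0 p1 in auto)
          have F0: "F \<ge> 0" unfolding F_def by (simp add: sum_nonneg)
          have Fle: "F \<le> 3/4 * N"
          proof -
            have "F = (\<Sum>k<n. if g k \<ge> t then real (Nw k) else 0)"
              unfolding F_def A_def by (rule sum.inter_filter) simp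
            also have "\<dots> \<le> (\<Sum>k<n. if y k < 0 then real (Nw k) else 0)"
            proof (intro sum_mono)
              fix k assume "k \<in> {..<n}"
              show "(if g k \<ge> t then real (Nw k) else 0) \<le> (if y k < 0 then real (Nw k) else 0)"
              proof (cases "g k \<ge> t")
                case True
                then have "e k > 1" unfolding g_def using t by (simp add: max_def split: if_splits)
                then have "- a * y k > 0" unfolding e_def by simp
                then have "y k < 0" using a0 by (simp add: mult_less_0_iff)
                then show ?thesis using True by simp
              qed simp
            qed
            also have "\<dots> \<le> 3/4 * N" by (rule negc)
            finally show ?thesis .
          qed
          have qlb: "F / N * (1/\<alpha>) \<le> q"
          proof -
            have "F / N * (1/\<alpha>) = (\<Sum>k\<in>A. real (Nw k) / (\<alpha> * N))"
              unfolding F_def by (simp add: sum_divide_distrib mult.commute)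
            also have "\<dots> \<le> q" unfolding q_def
              using plb Asub unfolding N_def by (intro sum_mono) auto
            finally show ?thesis .
          qed
          have qle1: "q \<le> 1"
          proof -
            have "q \<le> (\<Sum>k<n. p k)" unfolding q_def using Asub p0 by (intro sum_mono2) auto
            then show ?thesis using p1 by simp
          qed
          have fin: "(1 + \<mu>) / N * F \<le> q * (2 - q)"
          proof -
            define f where "f = F / N"
            define u where "u = 1/\<alpha>"
            define s where "s = f * u"
            have f0: "f \<ge> 0" and f34: "f \<le> 3/4" unfolding f_def using F0 Fle Npos by (auto simp: divide_le_eq)
            have u1: "u > 0" "u \<le> 1" "u^2 \<ge> 4/5 + \<mu>" using u unfolding u_def by auto
            have ku: "2 * u - 3/4 * u^2 \<ge> 1 + \<mu>" using keyu unfolding u_def .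
            have s0: "s \<ge> 0" unfolding s_def using f0 u1 by simp
            have sq: "s \<le> q" using qlb unfolding s_def f_def u_def .
            have a1: "q * (2 - q) - s * (2 - s) = (q - s) * (2 - q - s)" by (simp add: algebra_simps)
            have a2: "(q - s) * (2 - q - s) \<ge> 0" using sq qle1 by (intro mult_nonneg_nonneg) auto
            have "f * u^2 \<le> 3/4 * u^2" using f34 by (intro mult_right_mono) auto
            then have a3: "2 * u - f * u^2 - (1 + \<mu>) \<ge> 0" using ku by linarith
            have a4: "s * (2 - s) - (1 + \<mu>) * f = f * (2 * u - f * u^2 - (1 + \<mu>))"
              unfolding s_def by (simp add: algebra_simps power2_eq_square)
            have a5: "f * (2 * u - f * u^2 - (1 + \<mu>)) \<ge> 0" using f0 a3 by simp
            have "(1 + \<mu>) / N * F = (1 + \<mu>) * f" unfolding f_def by simp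
            then show ?thesis using a1 a2 a4 a5 by linarith
          qed
          have "(\<Sum>x\<in>I. if GG x \<ge> t then cc x else 0)
              = (\<Sum>i<n. \<Sum>j<n. if sel i j \<in> A then p i * p j else 0) - ((1 + \<mu>) / N) * F"
            unfolding sumI s1 s2 by simp
          then show "(\<Sum>x\<in>I. if GG x \<ge> t then cc x else 0) \<ge> 0" using pr fin by linarith
        qed
      qed
      have "(\<Sum>x\<in>I. cc x * GG x) = Q' - ((1 + \<mu>) / N) * G"
      proof -
        have h1: "(\<Sum>i<n. \<Sum>j<n. cc (Inl (i, j)) * GG (Inl (i, j))) = Q'"
          unfolding cc_def GG_def Q'_def by simp
        have h2: "(\<Sum>k<n. cc (Inr k) * GG (Inr k)) = - ((1 + \<mu>) / N) * G"
          unfolding cc_def GG_def G_def sum_distrib_left by (intro sum.cong refl) (simp add: algebra_simps)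
        show ?thesis unfolding sumI h1 h2 by simp
      qed
      then have "Q' - ((1 + \<mu>) / N) * G \<ge> 0" using L by simp
      then have "N * (((1 + \<mu>) / N) * G) \<le> N * Q'" using Npos by (intro mult_left_mono) auto
      then show ?thesis using Npos by simp
    qed
    have NQ: "N * Q \<ge> (1 + \<mu>) * (\<Psi> - N)"
    proof -
      have "(1 + \<mu>) * (\<Psi> - N) \<le> (1 + \<mu>) * G" using PsiG assms by (intro mult_left_mono) auto
      also have "\<dots> \<le> N * Q'" by (rule layer_res)
      also have "\<dots> \<le> N * Q" using QQ' Npos by (intro mult_left_mono) auto
      finally show ?thesis .
    qed
    define c where "c = a * (1 - S * a)"
    have c0: "c \<ge> 0" unfolding c_def using a0 Sa1 by simp
    have cmu: "c * (1 + \<mu>) \<le> 1"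
    proof -
      have "c \<le> a" unfolding c_def using a0 S0 by (simp add: mult_le_cancel_left1)
      then have "c * (1 + \<mu>) \<le> a * (1 + \<mu>)" using assms by (intro mult_right_mono) auto
      then show ?thesis using amu by linarith
    qed
    have cQ: "c * Q \<ge> c * ((1 + \<mu>) * (\<Psi> - N) / N)"
    proof -
      have "(1 + \<mu>) * (\<Psi> - N) / N \<le> Q" using NQ Npos by (simp add: divide_le_eq mult.commute)
      then show ?thesis using c0 by (intro mult_left_mono) auto
    qed
    define K where "K = B - c * (1 + \<mu>) / N - 1 + 3 * \<mu> * a / (4 * N)"
    have K0: "K \<le> 0"
    proof -
      define br where "br = - \<mu> / 4 + S * a / N + S * a * (1 + \<mu>)"
      have "K = (a / N) * br" unfolding K_def br_def B_def c_def using Npos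
        by (simp add: field_simps power2_eq_square)
      moreover have "br \<le> 0"
      proof -
        have sa0: "S * a \<ge> 0" using S0 a0 by simp
        have "S * a / N \<le> S * a" using divide_left_mono[OF Npos sa0] Npos by simp
        moreover have e1: "S * a * (2 + \<mu>) = 2 * (S * a) + (S * a) * \<mu>" by (simp add: algebra_simps)
        moreover have e2: "S * a * (1 + \<mu>) = S * a + (S * a) * \<mu>" by (simp add: algebra_simps)
        ultimately show ?thesis unfolding br_def using Sa by (rule aux_br)
      qed
      moreover have "a / N \<ge> 0" using a0 Npos by simp
      ultimately show ?thesis using mult_nonneg_nonpos[of "a / N" br] by simp
    qed
    have "step_exp n Nw p W sel a w \<le> \<Psi> * B - c * Q" using step unfolding c_def by simp
    also have "\<dots> \<le> \<Psi> * B - c * ((1 + \<mu>) * (\<Psi> - N) / N)" using cQ by linarith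
    also have "\<dots> = \<Psi> * (1 - 3 * \<mu> * a / (4 * N)) + \<Psi> * K + c * (1 + \<mu>)"
      unfolding K_def using Npos by (simp add: field_simps)
    also have "\<dots> \<le> \<Psi> * (1 - 3 * \<mu> * a / (4 * N)) + 1"
      using mult_nonneg_nonpos[OF \<Psi>0 K0] cmu by linarith
    finally show "step_exp n Nw p W sel a w \<le> (1 - 3 * \<mu> * a / (4 * real (Ntot n Nw))) * Psi a (slot_vec n Nw w) + 1"
      unfolding psi N_def by (simp add: mult.commute)
  qed
qed

end
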